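(* Consider the central arrangement in $\mathbb{R}^8$ (coordinates $l_{ijk}$, $i,j,k\in\{0,1\}$) of the six hyperplanes $\mathcal{L}_{1,0}=\{l_{000}+l_{011}-l_{001}-l_{010}=0\}$, $\mathcal{L}_{1,1}=\{l_{100}+l_{111}-l_{101}-l_{110}=0\}$, $\mathcal{L}_{2,0}=\{l_{000}+l_{101}-l_{001}-l_{100}=0\}$, $\mathcal{L}_{2,1}=\{l_{010}+l_{111}-l_{011}-l_{110}=0\}$, $\mathcal{L}_{3,0}=\{l_{000}+l_{110}-l_{010}-l_{100}=0\}$, $\mathcal{L}_{3,1}=\{l_{001}+l_{111}-l_{011}-l_{101}=0\}$. The complement of the union of these hyperplanes has exactly $46$ connected components (regions), and exactly $44$ of these regions are contained in the set $\{l\in\mathbb{R}^8:\ \exp(l)/\sum_{x}\exp(l_x)\in\mathcal{M}_{3,3}\}$, where $\exp$ is applied entrywise.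
   Context: $\Delta_7$ is the set of $2\times2\times2$ tensors with nonnegative entries summing to $1$. $\mathcal{M}_{3,3}$ is the set of $p\in\Delta_7$ that are a sum of three tensors $a\otimes b\otimes c$ (entries $a_ib_jc_k$) with $a,b,c\in\mathbb{R}^2_{\ge0}$. *)

theory Defs
  imports "HOL-Analysis.Analysis"
begin

text \<open>Index set {0,1}^3 encoded as bool triples: False = 0, True = 1.
  A 2x2x2 tensor is a function bool*bool*bool => real; a point l of R^8
  is a vector in real^(bool*bool*bool), with l_{ijk} = l $ (i,j,k).\<close>

type_synonym idx3 = "bool \<times> bool \<times> bool"

definition Delta7 :: "(idx3 \<Rightarrow> real) set" where
  "Delta7 = {p. (\<forall>x. 0 \<le> p x) \<and> (\<Sum>x\<in>UNIV. p x) = 1}"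

definition M33 :: "(idx3 \<Rightarrow> real) set" where
  "M33 = {p \<in> Delta7. \<exists>a b c :: nat \<Rightarrow> bool \<Rightarrow> real.
            (\<forall>r i. 0 \<le> a r i \<and> 0 \<le> b r i \<and> 0 \<le> c r i) \<and>
            (\<forall>i j k. p (i, j, k) = (\<Sum>r<3. a r i * b r j * c r k))}"

definition softmax :: "real ^ idx3 \<Rightarrow> (idx3 \<Rightarrow> real)" where
  "softmax l = (\<lambda>x. exp (l $ x) / (\<Sum>y\<in>UNIV. exp (l $ y)))"

definition L10 :: "real ^ idx3 \<Rightarrow> real" where
  "L10 l = l$(False,False,False) + l$(False,True,True) - l$(False,False,True) - l$(False,True,False)"
definition L11 :: "real ^ idx3 \<Rightarrow> real" where
  "L11 l = l$(True,False,False) + l$(True,True,True) - l$(True,False,True) - l$(True,True,False)"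
definition L20 :: "real ^ idx3 \<Rightarrow> real" where
  "L20 l = l$(False,False,False) + l$(True,False,True) - l$(False,False,True) - l$(True,False,False)"
definition L21 :: "real ^ idx3 \<Rightarrow> real" where
  "L21 l = l$(False,True,False) + l$(True,True,True) - l$(False,True,True) - l$(True,True,False)"
definition L30 :: "real ^ idx3 \<Rightarrow> real" where
  "L30 l = l$(False,False,False) + l$(True,True,False) - l$(False,True,False) - l$(True,False,False)"
definition L31 :: "real ^ idx3 \<Rightarrow> real" where
  "L31 l = l$(False,False,True) + l$(True,True,True) - l$(False,True,True) - l$(True,False,True)"

definition arr_complement :: "(real ^ idx3) set" where
  "arr_complement = {l. L10 l \<noteq> 0 \<and> L11 l \<noteq> 0 \<and> L20 l \<noteq> 0 \<and> L21 l \<noteq> 0 \<and>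
                        L30 l \<noteq> 0 \<and> L31 l \<noteq> 0}"

end

theory Submission
  imports Defs
begin

definition D3 :: "(idx3 \<Rightarrow> real) \<Rightarrow> bool" where
"D3 p = (\<exists>a b c :: nat \<Rightarrow> bool \<Rightarrow> real.
            (\<forall>r i. 0 \<le> a r i \<and> 0 \<le> b r i \<and> 0 \<le> c r i) \<and>
            (\<forall>i j k. p (i, j, k) = (\<Sum>r<3. a r i * b r j * c r k)))"

lemma sum3: "(\<Sum>r<(3::nat). f r) = f 0 + f 1 + (f 2 :: real)"
  by (simp add: numeral_3_eq_3 eval_nat_numeral)

lemma D3_mode1_pos:
  fixes q :: "idx3 \<Rightarrow> real"
  assumes pos: "\<And>x. 0 < q x"
  and d0: "q(False,False,True)*q(False,True,False) < q(False,False,False)*q(False,True,True)"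
  and d1: "q(True,False,True)*q(True,True,False) < q(True,False,False)*q(True,True,True)"
  shows "D3 q"
proof -
  define al where "al i = q(i,False,False) - q(i,False,True)*q(i,True,False)/q(i,True,True)" for i
  have al0: "0 \<le> al i" for i
  proof -
    have "q(i,False,True)*q(i,True,False) \<le> q(i,False,False)*q(i,True,True)"
      using d0 d1 by (cases i) auto
    then show ?thesis using pos[of "(i,True,True)"] by (simp add: al_def field_simps)
  qed
  define a where "a r i = (if r = (0::nat) then (if i then 0 else 1) else if r = 1 then (if i then 1 else 0) else al i)" for r i
  define b where "b r j = (if r = (0::nat) then (if j then 1 else q(False,False,True)/q(False,True,True))
     else if r = 1 then (if j then 1 else q(True,False,True)/q(True,True,True)) else (if j then 0 else (1::real)))" for r j
  define c where "c r k = (if r = (0::nat) then (if k then q(False,True,True) else q(False,True,False))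
     else if r = 1 then (if k then q(True,True,True) else q(True,True,False)) else (if k then 0 else (1::real)))" for r k
  have nn: "\<forall>r i. 0 \<le> a r i \<and> 0 \<le> b r i \<and> 0 \<le> c r i"
    using al0 pos by (auto simp: a_def b_def c_def less_imp_le)
  have eq: "\<forall>i j k. q (i, j, k) = (\<Sum>r<3. a r i * b r j * c r k)"
  proof (intro allI)
    fix i j k
    have p1: "q(False,True,True) \<noteq> 0" "q(True,True,True) \<noteq> 0" using pos[of "(False,True,True)"] pos[of "(True,True,True)"] by auto
    show "q (i, j, k) = (\<Sum>r<3. a r i * b r j * c r k)"
      unfolding sum3 using p1
      by (cases i; cases j; cases k) (simp_all add: a_def b_def c_def al_def field_simps)
  qed
  show ?thesis unfolding D3_def using nn eq by blast
qed

lemma D3_flip3: "D3 q \<Longrightarrow> D3 (\<lambda>(i,j,k). q (i,j,\<not>k))"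
  unfolding D3_def
  apply (elim exE conjE)
  subgoal for a b c
    apply (rule exI[of _ a], rule exI[of _ b], rule exI[of _ "\<lambda>r k. c r (\<not>k)"])
    by auto
  done

lemma D3_swap12: "D3 q \<Longrightarrow> D3 (\<lambda>(i,j,k). q (j,i,k))"
  unfolding D3_def
  apply (elim exE conjE)
  subgoal for a b c
    apply (rule exI[of _ b], rule exI[of _ a], rule exI[of _ c])
    by (auto simp: mult.commute mult.left_commute)
  done

lemma D3_swap13: "D3 q \<Longrightarrow> D3 (\<lambda>(i,j,k). q (k,j,i))"
  unfolding D3_def
  apply (elim exE conjE)
  subgoal for a b c
    apply (rule exI[of _ c], rule exI[of _ b], rule exI[of _ a])
    by (auto simp: mult.commute mult.left_commute)
  done

lemma D3_scale: assumes "D3 q" "0 < Z" shows "D3 (\<lambda>x. q x / Z)"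
  using assms unfolding D3_def
  apply (elim exE conjE)
  subgoal for a b c
    apply (rule exI[of _ "\<lambda>r i. a r i / Z"], rule exI[of _ b], rule exI[of _ c])
    by (auto simp: sum_divide_distrib)
  done

lemma D3_mode1:
  fixes q :: "idx3 \<Rightarrow> real"
  assumes pos: "\<And>x. 0 < q x"
  and d: "(q(False,False,True)*q(False,True,False) < q(False,False,False)*q(False,True,True) \<and>
           q(True,False,True)*q(True,True,False) < q(True,False,False)*q(True,True,True)) \<or>
          (q(False,False,True)*q(False,True,False) > q(False,False,False)*q(False,True,True) \<and>
           q(True,False,True)*q(True,True,False) > q(True,False,False)*q(True,True,True))"
  shows "D3 q"
  using d
proof (elim disjE)
  assume "q(False,False,True)*q(False,True,False) < q(False,False,False)*q(False,True,True) \<and>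
           q(True,False,True)*q(True,True,False) < q(True,False,False)*q(True,True,True)"
  then show ?thesis by (intro D3_mode1_pos) (use pos in auto)
next
  assume h: "q(False,False,True)*q(False,True,False) > q(False,False,False)*q(False,True,True) \<and>
           q(True,False,True)*q(True,True,False) > q(True,False,False)*q(True,True,True)"
  define q' where "q' = (\<lambda>(i,j,k). q (i,j,\<not>k))"
  have "D3 q'"
    apply (rule D3_mode1_pos)
    using pos h by (auto simp: q'_def split: prod.splits simp: mult.commute)
  then have "D3 (\<lambda>(i,j,k). q' (i,j,\<not>k))" by (rule D3_flip3)
  moreover have "(\<lambda>(i,j,k). q' (i,j,\<not>k)) = q" by (auto simp: q'_def)
  ultimately show ?thesis by simp
qed


type_synonym pat = "bool \<times> bool \<times> bool \<times> bool \<times> bool \<times> bool"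

definition cnd :: "bool \<Rightarrow> real \<Rightarrow> bool" where "cnd b x = (if b then 0 < x else x < 0)"

definition sg :: "real ^ idx3 \<Rightarrow> pat" where
  "sg l = (L10 l > 0, L11 l > 0, L20 l > 0, L21 l > 0, L30 l > 0, L31 l > 0)"

definition reg :: "pat \<Rightarrow> (real ^ idx3) set" where
  "reg s = {l. case s of (a0,a1,b0,b1,c0,c1) \<Rightarrow> cnd a0 (L10 l) \<and> cnd a1 (L11 l) \<and> cnd b0 (L20 l) \<and>
      cnd b1 (L21 l) \<and> cnd c0 (L30 l) \<and> cnd c1 (L31 l)}"

definition okp :: "pat \<Rightarrow> bool" where
  "okp s = (case s of (a0,a1,b0,b1,c0,c1) \<Rightarrow> \<not>((a0\<and>\<not>a1 \<or> b0\<and>\<not>b1 \<or> c0\<and>\<not>c1) \<and> (\<not>a0\<and>a1 \<or> \<not>b0\<and>b1 \<or> \<not>c0\<and>c1)))"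

definition goodp :: "pat \<Rightarrow> bool" where
  "goodp s = (okp s \<and> (case s of (a0,a1,b0,b1,c0,c1) \<Rightarrow> a0 = a1 \<or> b0 = b1 \<or> c0 = c1))"

lemma card_okp: "card (Collect okp) = 46"
  by code_simp

lemma card_goodp: "card (Collect goodp) = 44"
  by code_simp

lemma ident: "L10 l - L11 l = L20 l - L21 l" "L20 l - L21 l = L30 l - L31 l"
  by (simp_all add: L10_def L11_def L20_def L21_def L30_def L31_def)

lemma reg_sub: "l \<in> reg s \<Longrightarrow> l \<in> arr_complement \<and> sg l = s"
  by (cases s) (auto simp: reg_def cnd_def arr_complement_def sg_def split: if_splits)

lemma in_reg_sg: "l \<in> arr_complement \<Longrightarrow> l \<in> reg (sg l)"
  by (auto simp: reg_def cnd_def arr_complement_def sg_def)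

lemma okp_sg: "l \<in> arr_complement \<Longrightarrow> okp (sg l)"
  using ident[of l] unfolding okp_def sg_def arr_complement_def by auto

definition wit :: "real \<Rightarrow> real \<Rightarrow> real \<Rightarrow> real \<Rightarrow> real ^ idx3" where
  "wit t a b c = (\<chi> x. if x = (False,False,False) then t else if x = (False,True,True) then a
     else if x = (True,False,True) then b else if x = (True,True,False) then c
     else if x = (True,True,True) then a+b+c else 0)"

lemma wit_L: "L10 (wit t a b c) = t + a" "L11 (wit t a b c) = a" "L20 (wit t a b c) = t + b"
  "L21 (wit t a b c) = b" "L30 (wit t a b c) = t + c" "L31 (wit t a b c) = c"
  by (simp_all add: wit_def L10_def L11_def L20_def L21_def L30_def L31_def)

definition vv :: "bool \<Rightarrow> bool \<Rightarrow> real" where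
  "vv s0 s1 = (if s0 = s1 then (if s1 then 3 else -3) else (if s1 then 1 else -1))"

lemma reg_ne: assumes "okp s" shows "reg s \<noteq> {}"
proof -
  obtain a0 a1 b0 b1 c0 c1 where s: "s = (a0,a1,b0,b1,c0,c1)" by (cases s) auto
  define t :: real where "t = (if a0\<and>\<not>a1 \<or> b0\<and>\<not>b1 \<or> c0\<and>\<not>c1 then 2 else if \<not>a0\<and>a1 \<or> \<not>b0\<and>b1 \<or> \<not>c0\<and>c1 then -2 else 0)"
  have "wit t (vv a0 a1) (vv b0 b1) (vv c0 c1) \<in> reg s"
    using assms unfolding s reg_def okp_def
    by (simp add: wit_L t_def vv_def cnd_def) (cases a0; cases a1; cases b0; cases b1; cases c0; cases c1; simp)
  then show ?thesis by auto
qed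

lemma lin: "L (u *\<^sub>R x + v *\<^sub>R y) = u * L x + v * L y" if "L \<in> {L10, L11, L20, L21, L30, L31}" for u v :: real and L :: "real^idx3 \<Rightarrow> real"
  using that by (auto simp: L10_def L11_def L20_def L21_def L30_def L31_def algebra_simps)

lemma cnd_comb: assumes "cnd b x" "cnd b y" "0 \<le> u" "0 \<le> v" "u + v = 1" shows "cnd b (u * x + v * y)"
proof (cases b)
  case True
  then have "0 < x" "0 < y" using assms by (auto simp: cnd_def)
  then have "0 < u * x + v * y" using assms
    by (smt (verit, best) mult_nonneg_nonneg mult_pos_pos)
  then show ?thesis using True by (simp add: cnd_def)
next
  case False
  then have "x < 0" "y < 0" using assms by (auto simp: cnd_def)
  then have "u * x + v * y < 0" using assms
    by (smt (verit, best) mult_nonneg_nonpos mult_pos_neg)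
  then show ?thesis using False by (simp add: cnd_def)
qed

lemma reg_convex: "convex (reg s)"
  unfolding convex_def
proof (intro ballI allI impI)
  fix x y and u v :: real assume xy: "x \<in> reg s" "y \<in> reg s" and uv: "0 \<le> u" "0 \<le> v" "u + v = 1"
  show "u *\<^sub>R x + v *\<^sub>R y \<in> reg s"
    using xy cnd_comb[OF _ _ uv] unfolding reg_def
    by (cases s) (simp add: lin)
qed

lemma cont_L: "continuous_on UNIV L" if "L \<in> {L10, L11, L20, L21, L30, L31}"
  using that by (auto simp: L10_def[abs_def] L11_def[abs_def] L20_def[abs_def] L21_def[abs_def] L30_def[abs_def] L31_def[abs_def] intro!: continuous_intros)

lemma open_cnd: "continuous_on UNIV L \<Longrightarrow> open {l. cnd b (L l)}"
  by (cases b) (auto simp: cnd_def intro!: open_Collect_less continuous_intros)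

lemma reg_open: "open (reg s)"
proof -
  obtain a0 a1 b0 b1 c0 c1 where s: "s = (a0,a1,b0,b1,c0,c1)" by (cases s) auto
  have "reg s = {l. cnd a0 (L10 l)} \<inter> {l. cnd a1 (L11 l)} \<inter> {l. cnd b0 (L20 l)} \<inter>
     {l. cnd b1 (L21 l)} \<inter> {l. cnd c0 (L30 l)} \<inter> {l. cnd c1 (L31 l)}"
    by (auto simp: reg_def s)
  moreover have "open {l. cnd b (L l)}" if "L \<in> {L10, L11, L20, L21, L30, L31}" for b L
    using open_cnd cont_L that by blast
  ultimately show ?thesis by (metis open_Int insertI1 insertI2)
qed

lemma comps: "components arr_complement = reg ` Collect okp"
proof (rule components_open_unique)
  show "disjoint (reg ` Collect okp)"
    unfolding disjoint_def pairwise_def disjnt_def using reg_sub by blast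
  show "\<Union> (reg ` Collect okp) = arr_complement"
    using reg_sub in_reg_sg okp_sg by blast
  show "open X \<and> connected X \<and> X \<noteq> {}" if "X \<in> reg ` Collect okp" for X
    using that reg_open reg_ne convex_connected[OF reg_convex] by auto
qed

lemma inj_reg: "inj_on reg (Collect okp)"
proof (rule inj_onI)
  fix s s' assume "s \<in> Collect okp" "s' \<in> Collect okp" "reg s = reg s'"
  then obtain l where "l \<in> reg s" "l \<in> reg s'" using reg_ne by blast
  then show "s = s'" using reg_sub by metis
qed

lemma card_comps: "card (components arr_complement) = 46"
  using comps card_image[OF inj_reg] card_okp by simp


lemma M33_D3: "M33 = {p \<in> Delta7. D3 p}"
  by (simp add: M33_def D3_def)

lemma expq: "exp (a::real) * exp b < exp c * exp d \<longleftrightarrow> a + b < c + d"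
  by (simp add: exp_add[symmetric])

lemma D3_exp:
  assumes "l \<in> arr_complement"
    and "(0 < L10 l \<longleftrightarrow> 0 < L11 l) \<or> (0 < L20 l \<longleftrightarrow> 0 < L21 l) \<or> (0 < L30 l \<longleftrightarrow> 0 < L31 l)"
  shows "D3 (\<lambda>x. exp (l $ x))"
  using assms(2)
proof (elim disjE)
  assume "0 < L10 l \<longleftrightarrow> 0 < L11 l"
  then show ?thesis using assms(1)
    by (intro D3_mode1) (auto simp: expq arr_complement_def L10_def L11_def)
next
  assume h: "0 < L20 l \<longleftrightarrow> 0 < L21 l"
  define q' where "q' = (\<lambda>(i,j,k). exp (l $ (j,i,k)))"
  have "D3 q'" unfolding q'_def using h assms(1)
    by (intro D3_mode1) (auto simp: expq arr_complement_def L20_def L21_def)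
  then have "D3 (\<lambda>(i,j,k). q' (j,i,k))" by (rule D3_swap12)
  moreover have "(\<lambda>(i,j,k). q' (j,i,k)) = (\<lambda>x. exp (l $ x))" by (auto simp: q'_def)
  ultimately show ?thesis by simp
next
  assume h: "0 < L30 l \<longleftrightarrow> 0 < L31 l"
  define q' where "q' = (\<lambda>(i,j,k). exp (l $ (k,j,i)))"
  have "D3 q'" unfolding q'_def using h assms(1)
    by (intro D3_mode1) (auto simp: expq arr_complement_def L30_def L31_def)
  then have "D3 (\<lambda>(i,j,k). q' (k,j,i))" by (rule D3_swap13)
  moreover have "(\<lambda>(i,j,k). q' (k,j,i)) = (\<lambda>x. exp (l $ x))" by (auto simp: q'_def)
  ultimately show ?thesis by simp
qed

lemma Z_pos: "0 < (\<Sum>y\<in>UNIV. exp ((l::real^idx3) $ y))"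
  by (rule sum_pos) auto

lemma softmax_Delta7: "softmax l \<in> Delta7"
  using Z_pos[of l]
  by (auto simp: Delta7_def softmax_def sum_divide_distrib[symmetric] less_imp_le)

lemma good_in: assumes "goodp s" "l \<in> reg s" shows "softmax l \<in> M33"
proof -
  have l: "l \<in> arr_complement" "sg l = s" using reg_sub[OF assms(2)] by auto
  have "(0 < L10 l \<longleftrightarrow> 0 < L11 l) \<or> (0 < L20 l \<longleftrightarrow> 0 < L21 l) \<or> (0 < L30 l \<longleftrightarrow> 0 < L31 l)"
  proof -
    have "goodp (0<L10 l, 0<L11 l, 0<L20 l, 0<L21 l, 0<L30 l, 0<L31 l)"
      using assms(1) l(2) by (simp add: sg_def)
    then show ?thesis unfolding goodp_def by simp
  qed
  then have "D3 (\<lambda>x. exp (l $ x))" using D3_exp l(1) by blast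
  then have "D3 (softmax l)" unfolding softmax_def using D3_scale Z_pos by blast
  then show ?thesis using softmax_Delta7 by (simp add: M33_D3)
qed

definition par :: "idx3 \<Rightarrow> bool" where "par x = (case x of (i,j,k) \<Rightarrow> i = (j = k))"

lemma notD3:
  fixes p :: "idx3 \<Rightarrow> real"
  assumes A: "\<And>x. par x = b \<Longrightarrow> p x = A" and B: "\<And>x. par x \<noteq> b \<Longrightarrow> p x = B"
    and B0: "0 \<le> B" and AB: "3*B < A"
  shows "\<not> D3 p"
proof
  assume "D3 p"
  then obtain a bb c where nn: "\<forall>r i. 0 \<le> a r i \<and> 0 \<le> bb r i \<and> 0 \<le> c r i"
    and eq: "\<forall>i j k. p (i,j,k) = (\<Sum>r<(3::nat). a r i * bb r j * c r k)" unfolding D3_def by blast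
  define T where "T r i j k = a r i * bb r j * c r k" for r :: nat and i j k
  have Tnn: "0 \<le> T r i j k" for r i j k using nn by (simp add: T_def)
  have psum: "p (i,j,k) = T 0 i j k + T 1 i j k + T 2 i j k" for i j k
    using eq by (simp add: T_def sum3)
  have up: "T r i j k \<le> B" if "r < 3" "par (i,j,k) \<noteq> b" for r i j k
  proof -
    have "r = 0 \<or> r = 1 \<or> r = 2" using that by auto
    then have "T r i j k \<le> T 0 i j k + T 1 i j k + T 2 i j k" using Tnn[of 0 i j k] Tnn[of 1 i j k] Tnn[of 2 i j k]
      by auto
    then show ?thesis using psum[of i j k] B[OF that(2)] by simp
  qed
  have low: "\<exists>r<3. A/3 \<le> T r i j k" if "par (i,j,k) = b" for i j k
  proof (rule ccontr)
    assume "\<not> ?thesis"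
    then have h: "\<forall>r<3. T r i j k < A/3" by (auto simp: not_le)
    have "T 0 i j k < A/3" "T 1 i j k < A/3" "T 2 i j k < A/3"
      using h[rule_format, of 0] h[rule_format, of 1] h[rule_format, of 2] by auto
    then show False using psum[of i j k] A[OF that] by simp
  qed
  have kill: False if "r<3" "A/3 \<le> T r i j k" "A/3 \<le> T r i' j' k'"
     "T r i j k * T r i' j' k' = T r x1 x2 x3 * T r y1 y2 y3" "par(x1,x2,x3) \<noteq> b" "par (y1,y2,y3) \<noteq> b"
     for r i j k i' j' k' x1 x2 x3 y1 y2 y3
  proof -
    have a3: "0 \<le> A/3" using B0 AB by simp
    have "(A/3)*(A/3) \<le> T r i j k * T r i' j' k'" using mult_mono[OF that(2,3) Tnn a3] .
    also have "\<dots> \<le> B * B" unfolding that(4)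
      using mult_mono[OF up[OF that(1,5)] up[OF that(1,6)] B0 Tnn] .
    finally have "(A/3)*(A/3) \<le> B*B" .
    moreover have "B * B < (A/3)*(A/3)" using B0 AB by (intro mult_strict_mono) auto
    ultimately show False by simp
  qed
  have swk: "T r i j k * T r i' j' k' = T r i j k' * T r i' j' k" for r i j k i' j' k'
    by (simp add: T_def ac_simps)
  have swj: "T r i j k * T r i' j' k' = T r i j' k * T r i' j k'" for r i j k i' j' k'
    by (simp add: T_def ac_simps)
  obtain r1 where r1: "r1 < 3" "A/3 \<le> T r1 b False False" using low[of b False False] by (auto simp: par_def)
  obtain r2 where r2: "r2 < 3" "A/3 \<le> T r2 b True True" using low[of b True True] by (auto simp: par_def)
  obtain r3 where r3: "r3 < 3" "A/3 \<le> T r3 (\<not>b) False True" using low[of "\<not>b" False True] by (auto simp: par_def)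
  obtain r4 where r4: "r4 < 3" "A/3 \<le> T r4 (\<not>b) True False" using low[of "\<not>b" True False] by (auto simp: par_def)
  have "r1 = r2 \<or> r1 = r3 \<or> r1 = r4 \<or> r2 = r3 \<or> r2 = r4 \<or> r3 = r4" 
  proof -
    have "r1 \<in> {0,1,2}" "r2 \<in> {0,1,2}" "r3 \<in> {0,1,2}" "r4 \<in> {0,1,2}"
      using r1(1) r2(1) r3(1) r4(1) by auto
    then show ?thesis by auto
  qed
  have killk: False if "r<3" "A/3 \<le> T r i j k" "A/3 \<le> T r i' j' k'"
     "par(i,j,k') \<noteq> b" "par (i',j',k) \<noteq> b" for r i j k i' j' k'
    using kill[OF that(1,2,3) swk that(4,5)] .
  have killj: False if "r<3" "A/3 \<le> T r i j k" "A/3 \<le> T r i' j' k'"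
     "par(i,j',k) \<noteq> b" "par (i',j,k') \<noteq> b" for r i j k i' j' k'
    using kill[OF that(1,2,3) swj that(4,5)] .
  show False using \<open>r1 = r2 \<or> r1 = r3 \<or> r1 = r4 \<or> r2 = r3 \<or> r2 = r4 \<or> r3 = r4\<close>
  proof (elim disjE)
    assume e: "r1 = r2"
    have "A/3 \<le> T r1 b True True" using r2 e by simp
    from killk[OF r1 this] show False by (simp add: par_def)
  next
    assume e: "r1 = r3"
    have "A/3 \<le> T r1 (\<not>b) False True" using r3 e by simp
    from killk[OF r1 this] show False by (simp add: par_def)
  next
    assume e: "r1 = r4"
    have "A/3 \<le> T r1 (\<not>b) True False" using r4 e by simp
    from killj[OF r1 this] show False by (simp add: par_def)
  next
    assume e: "r2 = r3"
    have "A/3 \<le> T r2 (\<not>b) False True" using r3 e by simp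
    from killj[OF r2 this] show False by (simp add: par_def)
  next
    assume e: "r2 = r4"
    have "A/3 \<le> T r2 (\<not>b) True False" using r4 e by simp
    from killk[OF r2 this] show False by (simp add: par_def)
  next
    assume e: "r3 = r4"
    have "A/3 \<le> T r3 (\<not>b) True False" using r4 e by simp
    from killk[OF r3 this] show False by (simp add: par_def)
  qed
qed

definition bl :: "bool \<Rightarrow> real ^ idx3" where "bl b = (\<chi> x. if par x = b then 0 else -3)"

lemma bl_nth: "bl b $ (i,j,k) = (if (i = (j = k)) = b then 0 else -3)"
  by (simp add: bl_def par_def)
lemma blL: "L10 (bl b) = (if b then -6 else 6)" "L11 (bl b) = (if b then 6 else -6)"
  "L20 (bl b) = (if b then -6 else 6)" "L21 (bl b) = (if b then 6 else -6)"
  "L30 (bl b) = (if b then -6 else 6)" "L31 (bl b) = (if b then 6 else -6)"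
  by (cases b; simp add: bl_nth L10_def L11_def L20_def L21_def L30_def L31_def)+
lemma bad_notin: "softmax (bl b) \<notin> M33"
proof
  assume "softmax (bl b) \<in> M33"
  then have D: "D3 (softmax (bl b))" by (simp add: M33_D3)
  define Z where "Z = (\<Sum>y\<in>UNIV. exp (bl b $ y))"
  have Z: "0 < Z" using Z_pos unfolding Z_def .
  have e3: "4 \<le> exp (3::real)" using exp_ge_add_one_self[of 3] by simp
  have e: "3 * exp (-3::real) < 1" using e3 by (simp add: exp_minus field_simps)
  have "\<not> D3 (softmax (bl b))"
  proof (rule notD3[of b _ "1/Z" "exp (-3) / Z"])
    have sm: "softmax (bl b) x = exp (bl b $ x) / Z" for x
      unfolding softmax_def Z_def by (rule refl)
    have bx: "bl b $ x = (if par x = b then 0 else -3)" for x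
      by (cases x) (simp add: bl_nth par_def)
    show "softmax (bl b) x = 1 / Z" if "par x = b" for x
      using that by (simp add: sm bx)
    show "softmax (bl b) x = exp (-3) / Z" if "par x \<noteq> b" for x
      using that by (simp add: sm bx)
    show "0 \<le> exp (-3) / Z" using Z by simp
    show "3 * (exp (-3) / Z) < 1 / Z" using Z e by (simp add: field_simps)
  qed
  then show False using D by simp
qed

lemma bl_reg: "bl False \<in> reg (True,False,True,False,True,False)"
  "bl True \<in> reg (False,True,False,True,False,True)"
  by (simp_all add: reg_def cnd_def blL)

lemma bad_cases_all: "\<forall>s. okp s \<and> \<not> goodp s \<longrightarrow> s = (True,False,True,False,True,False) \<or> s = (False,True,False,True,False,True)"
  by code_simp

lemma bad_cases: "okp s \<Longrightarrow> \<not> goodp s \<Longrightarrow> s = (True,False,True,False,True,False) \<or> s = (False,True,False,True,False,True)"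
  using bad_cases_all by blast

lemma goodp_okp: "goodp s \<Longrightarrow> okp s" by (simp add: goodp_def)

lemma good_set: "{R \<in> components arr_complement. R \<subseteq> {l. softmax l \<in> M33}} = reg ` Collect goodp"
proof
  show "{R \<in> components arr_complement. R \<subseteq> {l. softmax l \<in> M33}} \<subseteq> reg ` Collect goodp"
  proof
    fix R assume R: "R \<in> {R \<in> components arr_complement. R \<subseteq> {l. softmax l \<in> M33}}"
    then obtain s where s: "okp s" "R = reg s" using comps by auto
    have "goodp s"
    proof (rule ccontr)
      assume "\<not> goodp s"
      then have "s = (True,False,True,False,True,False) \<or> s = (False,True,False,True,False,True)"
        using bad_cases s(1) by blast
      then obtain b where "bl b \<in> R" using bl_reg s(2) by blast
      then show False using R bad_notin by blast
    qed
    then show "R \<in> reg ` Collect goodp" using s by blast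
  qed
  show "reg ` Collect goodp \<subseteq> {R \<in> components arr_complement. R \<subseteq> {l. softmax l \<in> M33}}"
    using comps good_in goodp_okp by blast
qed

theorem mainTheorem13:
  shows "card (components arr_complement) = 46 \<and>
         card {R \<in> components arr_complement. R \<subseteq> {l. softmax l \<in> M33}} = 44"
proof
  show "card (components arr_complement) = 46" by (rule card_comps)
  have "inj_on reg (Collect goodp)" by (rule inj_on_subset[OF inj_reg]) (auto intro: goodp_okp)
  then show "card {R \<in> components arr_complement. R \<subseteq> {l. softmax l \<in> M33}} = 44"
    unfolding good_set using card_image card_goodp by metis
qed

end
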